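(* Let $(X,d_X)$ be a finite metric space and let $\mathcal{C}(X)$ and $\mathcal{D}(X)$ be two partitions of $X$ such that every set in $\mathcal{C}(X)$ and every set in $\mathcal{D}(X)$ has diameter at most $\delta$. Fix one of the following inter-cluster distances $d_{\mathcal{C}}$ on pairs of nonempty subsets $A,B\subseteq X$: $\max(A,B)=\max_{x\in A,y\in B} d_X(x,y)$, $\ \min(A,B)=\min_{x\in A,y\in B} d_X(x,y)$, or $\ \operatorname{avg}(A,B)=\frac{1}{|A||B|}\sum_{x\in A}\sum_{y\in B} d_X(x,y)$. Let $G_{\mathcal{C}(X)}$ and $G_{\mathcal{D}(X)}$ be the ClusterGraphs of $\mathcal{C}(X)$ and $\mathcal{D}(X)$ with respect to $d_{\mathcal{C}}$. Then for every vertex $u$ of $G_{\mathcal{C}(X)}$ (corresponding to the cluster $C_u\in\mathcal{C}(X)$), the image $\operatorname{im}(u)$ of $u$ in $G_{\mathcal{D}(X)}$ spans a clique in $G_{\mathcal{D}(X)}$, and the diameter of this clique, i.e. $\max\{ d_{\mathcal{C}}(D_i,D_j) : D_i, D_j \in \operatorname{im}(u),\ D_i\neq D_j\}$, is at most $3\delta$ when $d_{\mathcal{C}}$ is the maximum or the average distance, and at most $\delta$ when $d_{\mathcal{C}}$ is the minimum distance.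
   Context: A partition of $X$ is a collection of pairwise disjoint subsets (clusters) whose union is $X$; the diameter of a subset $S$ is $\max_{x,y\in S}d_X(x,y)$. The ClusterGraph of a partition $\mathcal{P}(X)$ with respect to an inter-cluster distance $d_{\mathcal{C}}$ is the complete graph whose vertices are the clusters of $\mathcal{P}(X)$, with the edge between clusters $P_i,P_j$ weighted by $d_{\mathcal{C}}(P_i,P_j)$. The image of a vertex $u$ of $G_{\mathcal{C}(X)}$ (cluster $C_u$) in $G_{\mathcal{D}(X)}$ is the set of vertices of $G_{\mathcal{D}(X)}$ whose clusters $D_j\in\mathcal{D}(X)$ satisfy $D_j\cap C_u\neq\emptyset$. The diameter of a set of vertices in such a weighted graph is the greatest edge weight between any two of its vertices. *)

theory Defs
  imports Complex_Main "HOL-Library.Disjoint_Sets"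
begin

definition finite_metric_space :: "'a set \<Rightarrow> ('a \<Rightarrow> 'a \<Rightarrow> real) \<Rightarrow> bool" where
  "finite_metric_space X d \<longleftrightarrow> finite X \<and>
     (\<forall>x\<in>X. \<forall>y\<in>X. d x y \<ge> 0 \<and> (d x y = 0 \<longleftrightarrow> x = y) \<and> d x y = d y x) \<and>
     (\<forall>x\<in>X. \<forall>y\<in>X. \<forall>z\<in>X. d x z \<le> d x y + d y z)"

definition is_partition :: "'a set \<Rightarrow> 'a set set \<Rightarrow> bool" where
  "is_partition X P \<longleftrightarrow> \<Union>P = X \<and> disjoint P \<and> (\<forall>S\<in>P. S \<noteq> {})"

definition set_diam :: "('a \<Rightarrow> 'a \<Rightarrow> real) \<Rightarrow> 'a set \<Rightarrow> real" where
  "set_diam d S = Max {d x y | x y. x \<in> S \<and> y \<in> S}"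

datatype linkage = MaxLink | MinLink | AvgLink

definition inter_dist :: "linkage \<Rightarrow> ('a \<Rightarrow> 'a \<Rightarrow> real) \<Rightarrow> 'a set \<Rightarrow> 'a set \<Rightarrow> real" where
  "inter_dist L d A B = (case L of
      MaxLink \<Rightarrow> Max {d x y | x y. x \<in> A \<and> y \<in> B}
    | MinLink \<Rightarrow> Min {d x y | x y. x \<in> A \<and> y \<in> B}
    | AvgLink \<Rightarrow> (\<Sum>x\<in>A. \<Sum>y\<in>B. d x y) / (real (card A) * real (card B)))"

text \<open>ClusterGraph: complete graph on the clusters, with edge weights given by the
  inter-cluster distance. Represented by its vertex set, edge relation and weight.\<close>
definition cg_vertices :: "'a set set \<Rightarrow> 'a set set" where
  "cg_vertices P = P"

definition cg_edge :: "'a set set \<Rightarrow> 'a set \<Rightarrow> 'a set \<Rightarrow> bool" where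
  "cg_edge P A B \<longleftrightarrow> A \<in> P \<and> B \<in> P \<and> A \<noteq> B"

definition cg_weight :: "linkage \<Rightarrow> ('a \<Rightarrow> 'a \<Rightarrow> real) \<Rightarrow> 'a set set \<Rightarrow> 'a set \<Rightarrow> 'a set \<Rightarrow> real" where
  "cg_weight L d P A B = inter_dist L d A B"

definition is_clique :: "'a set set \<Rightarrow> 'a set set \<Rightarrow> bool" where
  "is_clique P K \<longleftrightarrow> K \<subseteq> cg_vertices P \<and> (\<forall>A\<in>K. \<forall>B\<in>K. A \<noteq> B \<longrightarrow> cg_edge P A B)"

definition image_in :: "'a set set \<Rightarrow> 'a set \<Rightarrow> 'a set set" where
  "image_in D C = {Dj \<in> D. Dj \<inter> C \<noteq> {}}"

end

theory Submission
  imports Defs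
begin

lemma diam_le:
  assumes "finite S" "x \<in> S" "y \<in> S" "set_diam d S \<le> \<delta>"
  shows "d x y \<le> \<delta>"
proof -
  have fin: "finite {d x y | x y. x \<in> S \<and> y \<in> S}"
  proof -
    have "{d x y | x y. x \<in> S \<and> y \<in> S} = (\<lambda>(x,y). d x y) ` (S \<times> S)" by auto
    thus ?thesis using assms(1) by simp
  qed
  have "d x y \<le> set_diam d S" unfolding set_diam_def
    using fin assms(2,3) by (intro Max_ge) auto
  thus ?thesis using assms(4) by simp
qed

theorem proposition2:
  fixes X :: "'a set" and d :: "'a \<Rightarrow> 'a \<Rightarrow> real" and \<C> \<D> :: "'a set set"
    and \<delta> :: real and L :: linkage
  assumes "finite_metric_space X d"
    and "is_partition X \<C>" and "is_partition X \<D>"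
    and "\<forall>S\<in>\<C>. set_diam d S \<le> \<delta>" and "\<forall>S\<in>\<D>. set_diam d S \<le> \<delta>"
    and "u \<in> cg_vertices \<C>"
  shows "is_clique \<D> (image_in \<D> u) \<and>
    (\<forall>Di\<in>image_in \<D> u. \<forall>Dj\<in>image_in \<D> u. Di \<noteq> Dj \<longrightarrow>
        cg_weight L d \<D> Di Dj \<le> (if L = MinLink then \<delta> else 3 * \<delta>))"
proof -
  have finX: "finite X" and tri: "\<And>x y z. x \<in> X \<Longrightarrow> y \<in> X \<Longrightarrow> z \<in> X \<Longrightarrow> d x z \<le> d x y + d y z"
    using assms(1) unfolding finite_metric_space_def by auto
  have uC: "u \<in> \<C>" using assms(6) by (simp add: cg_vertices_def)
  have uX: "u \<subseteq> X" using assms(2) uC unfolding is_partition_def by auto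
  have finu: "finite u" using uX finX finite_subset by blast
  have du: "d x y \<le> \<delta>" if "x \<in> u" "y \<in> u" for x y
    using diam_le[OF finu that] assms(4) uC by auto
  have DX: "D \<subseteq> X" if "D \<in> \<D>" for D using assms(3) that unfolding is_partition_def by auto
  have finD: "finite D" if "D \<in> \<D>" for D using DX[OF that] finX finite_subset by blast
  have neD: "D \<noteq> {}" if "D \<in> \<D>" for D using assms(3) that unfolding is_partition_def by auto
  have dD: "d x y \<le> \<delta>" if "D \<in> \<D>" "x \<in> D" "y \<in> D" for D x y
    using diam_le[OF finD[OF that(1)] that(2,3)] assms(5) that(1) by auto
  have clique: "is_clique \<D> (image_in \<D> u)"
    unfolding is_clique_def cg_vertices_def cg_edge_def image_in_def by auto
  have main: "cg_weight L d \<D> Di Dj \<le> (if L = MinLink then \<delta> else 3 * \<delta>)"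
    if Di: "Di \<in> image_in \<D> u" and Dj: "Dj \<in> image_in \<D> u" for Di Dj
  proof -
    from Di obtain a where Di': "Di \<in> \<D>" "a \<in> Di" "a \<in> u" unfolding image_in_def by auto
    from Dj obtain b where Dj': "Dj \<in> \<D>" "b \<in> Dj" "b \<in> u" unfolding image_in_def by auto
    have bound: "d x y \<le> 3 * \<delta>" if "x \<in> Di" "y \<in> Dj" for x y
    proof -
      have X: "x \<in> X" "y \<in> X" "a \<in> X" "b \<in> X" using that Di' Dj' DX uX by auto
      have "d x y \<le> d x a + d a y" using tri X by blast
      also have "d a y \<le> d a b + d b y" using tri X by blast
      finally show ?thesis using dD[OF Di'(1) that(1) Di'(2)] du[OF Di'(3) Dj'(3)]
        dD[OF Dj'(1) Dj'(2) that(2)] by linarith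
    qed
    have fin: "finite {d x y | x y. x \<in> Di \<and> y \<in> Dj}"
    proof -
      have "{d x y | x y. x \<in> Di \<and> y \<in> Dj} = (\<lambda>(x,y). d x y) ` (Di \<times> Dj)" by auto
      thus ?thesis using finD Di' Dj' by simp
    qed
    have ne: "{d x y | x y. x \<in> Di \<and> y \<in> Dj} \<noteq> {}" using Di' Dj' by auto
    show ?thesis
    proof (cases L)
      case MaxLink
      then show ?thesis unfolding cg_weight_def inter_dist_def
        using fin ne bound by (auto simp: Max_le_iff)
    next
      case MinLink
      have "Min {d x y | x y. x \<in> Di \<and> y \<in> Dj} \<le> d a b"
        using fin Di'(2) Dj'(2) by (intro Min_le) auto
      then show ?thesis unfolding cg_weight_def inter_dist_def using MinLink du[OF Di'(3) Dj'(3)] by simp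
    next
      case AvgLink
      have s: "(\<Sum>x\<in>Di. \<Sum>y\<in>Dj. d x y) \<le> real (card Di) * (real (card Dj) * (3 * \<delta>))"
        by (intro sum_bounded_above) (simp add: sum_bounded_above bound)
      have pos: "real (card Di) * real (card Dj) > 0"
        using finD neD Di'(1) Dj'(1) by (simp add: card_gt_0_iff)
      have "(\<Sum>x\<in>Di. \<Sum>y\<in>Dj. d x y) / (real (card Di) * real (card Dj)) \<le> 3 * \<delta>"
        using s pos by (simp add: pos_divide_le_eq mult_ac)
      then show ?thesis unfolding cg_weight_def inter_dist_def using AvgLink by simp
    qed
  qed
  show ?thesis using clique main by blast
qed

end
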